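(* Fix a positive integer $M$ and a nudging parameter $\mu>0$. Then there exist solutions $\mathbf{u}(\mathbf{x},t)$ of the 2D incompressible Euler equations $$\mathbf{u}_t+\mathbf{u}\cdot\nabla\mathbf{u}=-\nabla p,\qquad\nabla\cdot\mathbf{u}=0$$ on $\mathbb{T}^2$ which cannot be recovered by the nudged system $$\mathbf{v}_t+\mathbf{v}\cdot\nabla\mathbf{v}=-\nabla q+\mu P_M(\mathbf{u}-\mathbf{v}),\qquad\nabla\cdot\mathbf{v}=0$$ with arbitrary initial condition $\mathbf{v}^{in}$; that is, for such $\mathbf{u}$ there is an initial condition $\mathbf{v}^{in}$ for which the corresponding solution $\mathbf{v}$ does not satisfy $\|\mathbf{u}(t)-\mathbf{v}(t)\|_H\to0$ as $t\to\infty$.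
   Context: $\mathbb{T}^2=[0,2\pi)^2$ with periodic boundary conditions. Let $\mathcal{V}$ be the set of $\mathbb{R}^2$-valued $2\pi$-periodic trigonometric polynomials $\varphi$ with $\nabla\cdot\varphi=0$ and $\int_{\mathbb{T}^2}\varphi=0$; $H$ is the closure of $\mathcal{V}$ in $L^2$, $V^s$ its closure in the $H^s$ seminorm; solutions of the Euler equations are taken with initial data in $V^3$ (for which the equations are globally well-posed). $P_M$ is the projection onto the Fourier modes $\mathbf{n}\in\mathbb{Z}^2\setminus\{(0,0)\}$ with $|\mathbf{n}|\le M$. *)

theory Defs
  imports "HOL-Analysis.Analysis"
begin

text \<open>Fundamental domain of the torus T^2 = [0,2pi)^2, points as real^2.\<close>
definition torus_box :: "(real^2) set" where
  "torus_box = cbox 0 (\<chi> i. 2 * pi)"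

definition periodic2 :: "(real^2 \<Rightarrow> 'a) \<Rightarrow> bool" where
  "periodic2 f \<longleftrightarrow> (\<forall>x i. f (x + (2 * pi) *\<^sub>R axis i 1) = f x)"

definition fcoef :: "(real^2 \<Rightarrow> real) \<Rightarrow> int \<times> int \<Rightarrow> complex" where
  "fcoef g n = integral torus_box
      (\<lambda>y. complex_of_real (g y) * cis (- (of_int (fst n) * y$1 + of_int (snd n) * y$2)))
      / complex_of_real (4 * pi\<^sup>2)"

definition modes :: "nat \<Rightarrow> (int \<times> int) set" where
  "modes M = {n. n \<noteq> (0, 0) \<and> (fst n)\<^sup>2 + (snd n)\<^sup>2 \<le> (int M)\<^sup>2}"

definition projM :: "nat \<Rightarrow> (real^2 \<Rightarrow> real) \<Rightarrow> real^2 \<Rightarrow> real" where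
  "projM M g x = Re (\<Sum>n\<in>modes M. fcoef g n * cis (of_int (fst n) * x$1 + of_int (snd n) * x$2))"

definition projMv :: "nat \<Rightarrow> (real^2 \<Rightarrow> real^2) \<Rightarrow> real^2 \<Rightarrow> real^2" where
  "projMv M w x = (\<chi> j. projM M (\<lambda>y. w y $ j) x)"

definition L2norm :: "(real^2 \<Rightarrow> real^2) \<Rightarrow> real" where
  "L2norm w = sqrt (integral torus_box (\<lambda>x. (norm (w x))\<^sup>2))"

definition divergence :: "(real^2 \<Rightarrow> real^2) \<Rightarrow> real^2 \<Rightarrow> real" where
  "divergence w x = (\<Sum>j\<in>UNIV. frechet_derivative w (at x) (axis j 1) $ j)"

definition pgrad :: "(real^2 \<Rightarrow> real) \<Rightarrow> real^2 \<Rightarrow> real^2" where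
  "pgrad p x = (\<chi> i. frechet_derivative p (at x) (axis i 1))"

text \<open>Membership in V^3: periodic, divergence-free, mean-zero, with
  sum_n |n|^6 |hat w(n)|^2 finite.  (In 2D, H^3 embeds into C^1, so such fields are
  classically differentiable.)\<close>
definition in_V3 :: "(real^2 \<Rightarrow> real^2) \<Rightarrow> bool" where
  "in_V3 w \<longleftrightarrow> periodic2 w \<and> (\<forall>x. w differentiable (at x)) \<and>
     (\<forall>x. divergence w x = 0) \<and> integral torus_box w = 0 \<and>
     (\<lambda>n::int \<times> int. (real_of_int ((fst n)\<^sup>2 + (snd n)\<^sup>2)) ^ 3 *
        (\<Sum>j\<in>UNIV. (cmod (fcoef (\<lambda>y. w y $ j) n))\<^sup>2)) summable_on UNIV"

definition fluid_sol ::
  "(real \<Rightarrow> real^2 \<Rightarrow> real^2) \<Rightarrow> (real \<Rightarrow> real^2 \<Rightarrow> real^2) \<Rightarrow> (real \<Rightarrow> real^2 \<Rightarrow> real) \<Rightarrow> bool" where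
  "fluid_sol F u p \<longleftrightarrow> (\<forall>t\<ge>0. in_V3 (u t) \<and> periodic2 (p t) \<and>
     (\<forall>x. p t differentiable (at x) \<and>
        ((\<lambda>s. u s x) has_vector_derivative
           (F t x - frechet_derivative (u t) (at x) (u t x) - pgrad (p t) x)) (at t within {0..})))"

end

theory Submission
  imports Defs "HOL-Analysis.Kronecker_Approximation_Theorem"
begin

lemma int_cis:
  fixes m :: int assumes "m \<noteq> 0"
  shows "integral {0..2*pi} (\<lambda>t. cis (of_int m * t)) = 0"
proof -
  have "integral {0..2*pi} (\<lambda>t. exp((\<i> * of_int m) * complex_of_real t)) =
     (exp((\<i> * of_int m) * of_real (2*pi)) - 1) / (\<i> * of_int m)"
    by (rule integral_exp) (use assms in auto)
  also have "exp((\<i> * of_int m) * of_real (2*pi)) = 1"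
  proof -
    have "(\<i> * of_int m) * of_real (2*pi) = complex_of_real (2 * real_of_int m * pi) * \<i>" by simp
    then show ?thesis using exp_integer_2pi[of "real_of_int m"] by (simp add: mult_ac)
  qed
  finally have "integral {0..2*pi} (\<lambda>t. exp((\<i> * of_int m) * complex_of_real t)) = 0" by simp
  moreover have "(\<lambda>t. cis (of_int m * t)) = (\<lambda>t. exp((\<i> * of_int m) * complex_of_real t))"
    by (auto simp: cis_conv_exp mult_ac)
  ultimately show ?thesis by simp
qed

definition gg :: "real^2 \<Rightarrow> real \<times> real" where "gg y = (y$1, y$2)"
definition hh :: "real \<times> real \<Rightarrow> real^2" where "hh z = (\<chi> i. if i = 1 then fst z else snd z)"

lemma ex2: "(\<exists>i::2. P i) \<longleftrightarrow> P 1 \<or> P 2"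
  using forall_2[of "\<lambda>i. \<not> P i"] by blast

lemma hh_gg: "hh (gg x) = x"
  by (simp add: hh_def gg_def vec_eq_iff forall_2)
lemma gg_hh: "gg (hh z) = z"
  by (simp add: hh_def gg_def)

lemma gg_img: "gg ` cbox u v = cbox (u$1,u$2) (v$1,v$2)"
proof
  show "gg ` cbox u v \<subseteq> cbox (u$1,u$2) (v$1,v$2)"
    by (auto simp: gg_def mem_box_cart cbox_Pair_eq)
  show "cbox (u$1,u$2) (v$1,v$2) \<subseteq> gg ` cbox u v"
  proof
    fix z assume z: "z \<in> cbox (u$1,u$2) (v$1,v$2)"
    have "hh z \<in> cbox u v" using z
      by (cases z) (auto simp: hh_def mem_box_cart cbox_Pair_eq forall_2)
    then show "z \<in> gg ` cbox u v" using gg_hh by (metis image_eqI)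
  qed
qed

lemma hh_img: "hh ` cbox (s1,t1) (s2,t2) = cbox (\<chi> i. if i = 1 then s1 else t1) (\<chi> i. if i = 1 then s2 else t2)"
proof
  show "hh ` cbox (s1,t1) (s2,t2) \<subseteq> cbox (\<chi> i. if i = 1 then s1 else t1) (\<chi> i. if i = 1 then s2 else t2)"
    by (auto simp: hh_def mem_box_cart cbox_Pair_eq)
  show "cbox (\<chi> i. if i = 1 then s1 else t1) (\<chi> i. if i = 1 then s2 else t2) \<subseteq> hh ` cbox (s1,t1) (s2,t2)"
  proof
    fix y :: "real^2" assume y: "y \<in> cbox (\<chi> i. if i = 1 then s1 else t1) (\<chi> i. if i = 1 then s2 else t2)"
    have "gg y \<in> cbox (s1,t1) (s2,t2)" using y
      by (auto simp: gg_def mem_box_cart cbox_Pair_eq forall_2 split: if_splits)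
    then show "y \<in> hh ` cbox (s1,t1) (s2,t2)" using hh_gg by (metis image_eqI)
  qed
qed

lemma gg_content: "Henstock_Kurzweil_Integration.content (gg ` cbox u v) = 1 * Henstock_Kurzweil_Integration.content (cbox u v)"
proof -
  have "Henstock_Kurzweil_Integration.content (gg ` cbox u v) = Henstock_Kurzweil_Integration.content (cbox (u$1) (v$1)) * Henstock_Kurzweil_Integration.content (cbox (u$2) (v$2))"
    by (simp add: gg_img content_Pair)
  also have "\<dots> = Henstock_Kurzweil_Integration.content (cbox u v)"
    by (auto simp: content_cbox_if_cart interval_eq_empty_cart UNIV_2 forall_2 ex2 content_real_if)
  finally show ?thesis by simp
qed

lemma hh_content: "Henstock_Kurzweil_Integration.content (hh ` cbox u v) = 1 * Henstock_Kurzweil_Integration.content (cbox u v)"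
proof -
  obtain s1 t1 s2 t2 where uv: "u = (s1,t1)" "v = (s2,t2)" by (cases u, cases v) auto
  have "Henstock_Kurzweil_Integration.content (hh ` cbox u v) = Henstock_Kurzweil_Integration.content (cbox (\<chi> i. if i = 1 then s1 else t1) (\<chi> i. if i = 1 then s2 else t2) :: (real^2) set)"
    by (simp add: uv hh_img)
  also have "\<dots> = Henstock_Kurzweil_Integration.content (cbox s1 s2) * Henstock_Kurzweil_Integration.content (cbox t1 t2)"
    by (auto simp: content_cbox_if_cart interval_eq_empty_cart UNIV_2 forall_2 ex2 content_real_if)
  also have "\<dots> = Henstock_Kurzweil_Integration.content (cbox u v)" by (simp add: uv content_Pair)
  finally show ?thesis by simp
qed

lemma torus_box_hh: "torus_box = hh ` cbox (0,0) (2*pi,2*pi)"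
  unfolding torus_box_def hh_img
  by (rule arg_cong2[where f=cbox]) (auto simp: vec_eq_iff)

lemma box_prod:
  fixes a b :: "real \<Rightarrow> 'a::{real_normed_field,banach}"
  assumes ca: "continuous_on UNIV a" and cb: "continuous_on UNIV b"
  shows "integral torus_box (\<lambda>y. a (y$1) * b (y$2)) = integral {0..2*pi} a * integral {0..2*pi} b"
proof -
  define f where "f = (\<lambda>z::real\<times>real. a (fst z) * b (snd z))"
  have cf: "continuous_on UNIV f" unfolding f_def
    by (intro continuous_intros continuous_on_compose2[OF ca] continuous_on_compose2[OF cb]) auto
  let ?B = "cbox (0::real,0::real) (2*pi,2*pi)"
  have I: "(f has_integral integral ?B f) ?B"
    by (rule integrable_integral, rule integrable_continuous, rule continuous_on_subset[OF cf]) auto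
  have "((\<lambda>y. f (gg y)) has_integral (1/1) *\<^sub>R integral ?B f) (hh ` ?B)"
  proof (rule has_integral_twiddle[where g=gg and h=hh])
    show "continuous (at x) gg" for x unfolding gg_def by (intro continuous_intros)
    show "\<exists>w z. gg ` cbox u v = cbox w z" for u v using gg_img by blast
    show "\<exists>w z. hh ` cbox u v = cbox w z" for u v
      by (cases u, cases v) (use hh_img in blast)
  qed (auto simp: hh_gg gg_hh gg_content I)
  then have "integral torus_box (\<lambda>y. f (gg y)) = integral ?B f"
    by (simp add: torus_box_hh integral_unique)
  moreover have "(\<lambda>y. f (gg y)) = (\<lambda>y. a (y$1) * b (y$2))" by (simp add: f_def gg_def)
  moreover have "integral ?B f = integral (cbox 0 (2*pi)) (\<lambda>x. integral (cbox 0 (2*pi)) (\<lambda>y. f (x, y)))"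
    by (rule integral_prod_continuous, rule continuous_on_subset[OF cf]) auto
  moreover have "\<dots> = integral {0..2*pi} a * integral {0..2*pi} b"
    by (simp add: f_def)
  ultimately show ?thesis by simp
qed

lemma sin_cis: "complex_of_real (sin x) = (cis x - cis (-x)) / (2 * \<i>)"
proof -
  have "cis x - cis (-x) = 2 * \<i> * complex_of_real (sin x)" by (simp add: complex_eq_iff)
  then show ?thesis by simp
qed

lemma int_cis_diff:
  fixes m1 m2 :: int assumes "m1 \<noteq> 0" "m2 \<noteq> 0"
  shows "integral {0..2*pi} (\<lambda>t. cis (of_int m1 * t) - cis (of_int m2 * t)) = 0"
proof -
  have c: "(\<lambda>t. cis (of_int m * t)) integrable_on {0..2*pi}" for m :: int
    by (intro integrable_continuous_interval continuous_intros)
  show ?thesis using int_cis[OF assms(1)] int_cis[OF assms(2)]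
    by (simp add: integral_diff[OF c c])
qed

lemma fcoef_sin:
  fixes k :: nat and c :: real and n :: "int \<times> int"
  assumes "n \<noteq> (0, int k)" "n \<noteq> (0, - int k)"
  shows "fcoef (\<lambda>y. c * sin (real k * y$2)) n = 0"
proof -
  obtain n1 n2 where n: "n = (n1, n2)" by (cases n)
  define a where "a = (\<lambda>s::real. cis (of_int (-n1) * s))"
  define b where "b = (\<lambda>t::real. complex_of_real (c * sin (real k * t)) * cis (of_int (-n2) * t))"
  have eq: "(\<lambda>y::real^2. complex_of_real (c * sin (real k * y$2)) *
       cis (- (of_int (fst n) * y$1 + of_int (snd n) * y$2))) = (\<lambda>y. a (y$1) * b (y$2))"
    by (auto simp: a_def b_def n cis_mult algebra_simps)
  have ca: "continuous_on UNIV a" unfolding a_def by (intro continuous_intros)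
  have cb: "continuous_on UNIV b" unfolding b_def by (intro continuous_intros)
  have "integral {0..2*pi} a * integral {0..2*pi} b = 0"
  proof (cases "n1 = 0")
    case False
    then show ?thesis unfolding a_def using int_cis[of "-n1"] by simp
  next
    case True
    then have h1: "int k - n2 \<noteq> 0" "- int k - n2 \<noteq> 0" using assms n by auto
    have "b = (\<lambda>t. (c / (2 * \<i>)) * (cis (of_int (int k - n2) * t) - cis (of_int (- int k - n2) * t)))"
    proof
      fix t
      have m1: "cis (real k * t) * cis (of_int (-n2) * t) = cis (of_int (int k - n2) * t)"
        unfolding cis_mult by (rule arg_cong[where f=cis]) (simp add: algebra_simps)
      have m2: "cis (- (real k * t)) * cis (of_int (-n2) * t) = cis (of_int (- int k - n2) * t)"
        unfolding cis_mult by (rule arg_cong[where f=cis]) (simp add: algebra_simps)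
      have "b t = complex_of_real c * ((cis (real k * t) - cis (- (real k * t))) / (2 * \<i>)) * cis (of_int (-n2) * t)"
        unfolding b_def of_real_mult sin_cis by simp
      also have "\<dots> = (c / (2 * \<i>)) * (cis (real k * t) * cis (of_int (-n2) * t) - cis (- (real k * t)) * cis (of_int (-n2) * t))"
        by (simp add: field_simps)
      finally show "b t = (c / (2 * \<i>)) * (cis (of_int (int k - n2) * t) - cis (of_int (- int k - n2) * t))"
        unfolding m1 m2 .
    qed
    then have "integral {0..2*pi} b = 0"
      using int_cis_diff[OF h1] by simp
    then show ?thesis by simp
  qed
  then show ?thesis unfolding fcoef_def eq box_prod[OF ca cb] by simp
qed

definition VV :: "nat \<Rightarrow> real^2 \<Rightarrow> real^2" where
  "VV k x = sin (real k * x$2) *\<^sub>R axis 1 1"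

definition DV :: "nat \<Rightarrow> real^2 \<Rightarrow> real^2 \<Rightarrow> real^2" where
  "DV k x h = (cos (real k * x$2) * (real k * h$2)) *\<^sub>R axis 1 1"

lemma VV_deriv: "(VV k has_derivative DV k x) (at x)"
  unfolding VV_def DV_def[abs_def]
  by (auto intro!: derivative_eq_intros bounded_linear.has_derivative[OF bounded_linear_vec_nth] has_derivative_ident)

lemma VV_frechet: "frechet_derivative (VV k) (at x) = DV k x"
  using frechet_derivative_at[OF VV_deriv] by simp

lemma zero_frechet: "frechet_derivative (\<lambda>x::'a::real_normed_vector. 0::'b::real_normed_vector) (at x) = (\<lambda>h. 0)"
  using frechet_derivative_at[OF has_derivative_const[of 0 "at x"]] by simp

lemma pgrad_zero: "pgrad (\<lambda>x. 0) x = 0"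
  by (simp add: pgrad_def zero_frechet vec_eq_iff)

lemma VV_comp: "VV k y $ j = (if j = 1 then 1 else 0) * sin (real k * y$2)"
  by (simp add: VV_def axis_def)

lemma two_ne_one: "(2::2) \<noteq> 1" using forall_2 by (metis exhaust_2 num.distinct(1) one_neq_zero) 

lemma VV_div: "divergence (VV k) x = 0"
  by (simp add: divergence_def VV_frechet DV_def UNIV_2 axis_def two_ne_one)

lemma VV_conv: "frechet_derivative (VV k) (at x) (VV k x) = 0"
  by (simp add: VV_frechet DV_def VV_def axis_def two_ne_one)

lemma VV_periodic: "periodic2 (VV k)"
  unfolding periodic2_def
proof (intro allI)
  fix x :: "real^2" and i :: 2
  show "VV k (x + (2 * pi) *\<^sub>R axis i 1) = VV k x"
  proof (cases "i = 1")
    case True then show ?thesis by (simp add: VV_def axis_def two_ne_one)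
  next
    case False then have "i = 2" by (metis exhaust_2)
    have s: "sin (real k * 2 * pi) = 0" "cos (real k * 2 * pi) = 1"
      using sin_2npi[of k] cos_2npi[of k] by (simp_all add: mult_ac)
    have "sin (real k * (x$2 + 2 * pi)) = sin (real k * x$2)"
      by (simp add: distrib_left sin_add mult.assoc[symmetric] s)
    then show ?thesis using \<open>i = 2\<close> by (simp add: VV_def axis_def)
  qed
qed

lemma torus_box_cont_int:
  fixes f :: "real^2 \<Rightarrow> 'a::banach"
  assumes "continuous_on UNIV f"
  shows "f integrable_on torus_box"
  unfolding torus_box_def by (rule integrable_continuous, rule continuous_on_subset[OF assms]) auto

lemma sin_box_int:
  assumes "k > 0"
  shows "integral torus_box (\<lambda>y::real^2. sin (real k * y$2)) = 0"
proof -
  have "fcoef (\<lambda>y. 1 * sin (real k * y$2)) (0,0) = 0"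
    by (rule fcoef_sin) (use assms in auto)
  then have "integral torus_box (\<lambda>y::real^2. complex_of_real (sin (real k * y$2))) = 0"
    by (simp add: fcoef_def)
  moreover have "((\<lambda>y::real^2. complex_of_real (sin (real k * y$2))) has_integral
      complex_of_real (integral torus_box (\<lambda>y::real^2. sin (real k * y$2)))) torus_box"
    by (rule has_integral_of_real, rule integrable_integral, rule torus_box_cont_int)
       (intro continuous_intros)
  ultimately show ?thesis by (simp add: integral_unique)
qed

lemma VV_int: assumes "k > 0" shows "integral torus_box (VV k) = 0"
proof -
  have "(\<lambda>y::real^2. sin (real k * y$2)) integrable_on torus_box"
    by (rule torus_box_cont_int) (intro continuous_intros)
  then have "((\<lambda>y::real^2. sin (real k * y$2)) has_integral 0) torus_box"
    using integrable_integral sin_box_int[OF assms] by fastforce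
  from has_integral_scaleR_left[OF this, of "axis 1 1"]
  have "(VV k has_integral 0) torus_box"
    unfolding VV_def[abs_def] scale_zero_left .
  then show ?thesis by (rule integral_unique)
qed

lemma VV_fcoef: "n \<noteq> (0, int k) \<Longrightarrow> n \<noteq> (0, - int k) \<Longrightarrow> fcoef (\<lambda>y. VV k y $ j) n = 0"
  unfolding VV_comp by (rule fcoef_sin)

lemma VV_fcoef_neg: "n \<noteq> (0, int k) \<Longrightarrow> n \<noteq> (0, - int k) \<Longrightarrow> fcoef (\<lambda>y. (0 - VV k y) $ j) n = 0"
proof -
  assume a: "n \<noteq> (0, int k)" "n \<noteq> (0, - int k)"
  have eq: "(\<lambda>y. (0 - VV k y) $ j) = (\<lambda>y. (- (if j = 1 then 1 else 0)) * sin (real k * y$2))"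
    by (simp add: VV_comp)
  show ?thesis unfolding eq by (rule fcoef_sin[OF a])
qed

lemma VV_summable:
  "(\<lambda>n::int \<times> int. (real_of_int ((fst n)\<^sup>2 + (snd n)\<^sup>2)) ^ 3 *
        (\<Sum>j\<in>UNIV. (cmod (fcoef (\<lambda>y. VV k y $ j) n))\<^sup>2)) summable_on UNIV"
  (is "?G summable_on UNIV")
proof -
  have "?G summable_on UNIV \<longleftrightarrow> ?G summable_on {(0, int k), (0, - int k)}"
    by (rule summable_on_cong_neutral) (auto simp: VV_fcoef)
  then show ?thesis by simp
qed

lemma VV_in_V3: assumes "k > 0" shows "in_V3 (VV k)"
  unfolding in_V3_def
proof (intro conjI allI)
  show "VV k differentiable at x" for x using VV_deriv unfolding differentiable_def by blast
qed (simp_all only: VV_periodic VV_div VV_int[OF assms] VV_summable)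

lemma VV_proj:
  assumes "k = M + 1"
  shows "projMv M (\<lambda>y. 0 - VV k y) x = 0"
proof -
  have "fcoef (\<lambda>y. (0 - VV k y) $ j) n = 0" if "n \<in> modes M" for n j
  proof (rule VV_fcoef_neg)
    have lt: "(int M)\<^sup>2 < (int k)\<^sup>2" using assms by (simp add: power_strict_mono)
    have le: "(fst n)\<^sup>2 + (snd n)\<^sup>2 \<le> (int M)\<^sup>2" using that by (simp add: modes_def)
    show "n \<noteq> (0, int k)"
    proof
      assume "n = (0, int k)"
      with le have "(int k)\<^sup>2 \<le> (int M)\<^sup>2" by simp
      with lt show False by linarith
    qed
    show "n \<noteq> (0, - int k)"
    proof
      assume "n = (0, - int k)"
      with le have "(int k)\<^sup>2 \<le> (int M)\<^sup>2" by simp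
      with lt show False by linarith
    qed
  qed
  then show ?thesis by (simp add: projMv_def projM_def vec_eq_iff)
qed

lemma sin_sq_int:
  assumes "k > 0"
  shows "((\<lambda>t. (sin (real k * t))\<^sup>2) has_integral pi) {0..2*pi}"
proof -
  define f where "f = (\<lambda>t. t / 2 - sin (2 * real k * t) / (4 * real k))"
  have d: "(f has_vector_derivative (sin (real k * t))\<^sup>2) (at t within {0..2*pi})" for t
  proof -
    have "(f has_real_derivative (1/2 - cos (2 * real k * t) * (2 * real k) / (4 * real k))) (at t)"
      unfolding f_def by (auto intro!: derivative_eq_intros)
    moreover have "1/2 - cos (2 * real k * t) * (2 * real k) / (4 * real k) = (sin (real k * t))\<^sup>2"
    proof -
      have c: "cos (2 * real k * t) = 1 - 2 * (sin (real k * t))\<^sup>2"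
        using cos_double_sin[of "real k * t"] by (simp add: mult.assoc)
      show ?thesis using assms unfolding c by (simp add: field_simps)
    qed
    ultimately show ?thesis
      by (simp add: has_real_derivative_iff_has_vector_derivative has_vector_derivative_at_within)
  qed
  have s: "sin (2 * real k * (2 * pi)) = 0"
    using sin_2npi[of "2*k"] by (simp add: mult_ac)
  have "((\<lambda>t. (sin (real k * t))\<^sup>2) has_integral (f (2*pi) - f 0)) {0..2*pi}"
    by (rule fundamental_theorem_of_calculus) (use d in auto)
  moreover have "f (2*pi) - f 0 = pi" unfolding f_def using s by simp
  ultimately show ?thesis by simp
qed

lemma VV_L2: assumes "k > 0" shows "L2norm (\<lambda>x. 0 - VV k x) = sqrt (2 * pi * pi)"
proof -
  have n: "(norm (0 - VV k x))\<^sup>2 = 1 * (sin (real k * x$2))\<^sup>2" for x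
    by (simp add: VV_def)
  have "integral torus_box (\<lambda>y::real^2. 1 * (sin (real k * y$2))\<^sup>2)
      = integral {0..2*pi} (\<lambda>t. 1::real) * integral {0..2*pi} (\<lambda>t. (sin (real k * t))\<^sup>2)"
    by (rule box_prod[where a="\<lambda>t. 1" and b="\<lambda>t. (sin (real k * t))\<^sup>2"]) (intro continuous_intros)+
  also have "\<dots> = 2 * pi * pi" using integral_unique[OF sin_sq_int[OF assms]] by simp
  finally show ?thesis unfolding L2norm_def n by simp
qed

lemma zero_in_V3: "in_V3 (\<lambda>x. 0)"
  unfolding in_V3_def
  by (simp add: periodic2_def divergence_def zero_frechet fcoef_def)

lemma zero_sol: "fluid_sol (\<lambda>t x. 0) (\<lambda>t x. 0) (\<lambda>t x. 0)"
  unfolding fluid_sol_def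
  by (simp add: zero_in_V3 periodic2_def zero_frechet pgrad_zero)

theorem corollary4p5:
  fixes M :: nat and \<mu> :: real
  assumes "M > 0" and "\<mu> > 0"
  shows "\<exists>u p. fluid_sol (\<lambda>t x. 0) u p \<and>
           (\<exists>v q. fluid_sol (\<lambda>t x. \<mu> *\<^sub>R projMv M (\<lambda>y. u t y - v t y) x) v q \<and>
              \<not> ((\<lambda>t. L2norm (\<lambda>x. u t x - v t x)) \<longlongrightarrow> 0) at_top)"
proof (intro exI conjI)
  define k where "k = M + 1"
  have k0: "k > 0" by (simp add: k_def)
  show "fluid_sol (\<lambda>t x. 0) (\<lambda>t x. 0) (\<lambda>t x. 0)" by (rule zero_sol)
  show "fluid_sol (\<lambda>t x. \<mu> *\<^sub>R projMv M (\<lambda>y. (\<lambda>t x. 0) t y - (\<lambda>t. VV k) t y) x) (\<lambda>t. VV k) (\<lambda>t x. 0)"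
    unfolding fluid_sol_def
    using VV_in_V3[OF k0] VV_proj[OF k_def] VV_conv[of k] pgrad_zero
    by (simp add: periodic2_def)
  have L: "L2norm (\<lambda>x. (\<lambda>t x. 0) t x - (\<lambda>t. VV k) t x) = sqrt (2 * pi * pi)" for t :: real
    using VV_L2[OF k0] by simp
  show "\<not> ((\<lambda>t::real. L2norm (\<lambda>x. (\<lambda>t x. 0) t x - (\<lambda>t. VV k) t x)) \<longlongrightarrow> 0) at_top"
  proof
    assume "((\<lambda>t::real. L2norm (\<lambda>x. (\<lambda>t x. 0) t x - (\<lambda>t. VV k) t x)) \<longlongrightarrow> 0) at_top"
    then have "((\<lambda>t::real. sqrt (2 * pi * pi)) \<longlongrightarrow> 0) at_top" using L by simp
    then have "sqrt (2 * pi * pi) = 0" by (simp add: tendsto_const_iff)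
    then show False by simp
  qed
qed

end
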